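(* Let $(X,p)$ be a complete partial metric space and $(Y,s)$ a strong partial metric space, and let $f,g:X\to Y$ be sequentially continuous. Suppose $g$ is consistent and there are real numbers $r$, $A\ge0$ and $0<c<1$ such that for every $x\in X$ there exists $z\in X$ with $$s(f(z),g(z))-s(f(z),f(z))\le c[s(f(x),g(x))-s(f(x),f(x))]$$ and $$r\le p(z,z)\le p(x,z)\le r+A[s(f(x),g(x))-s(f(x),f(x))]$$ (i.e. $f$ and $g$ are $f$-mutually $c_r$-contractive). Then $f$ and $g$ have a coincidence point, i.e. there is $a\in X$ with $f(a)=g(a)$.
   Context: A partial metric on $X$ is $p:X\times X\to\mathbb{R}$ with, for all $x,y,z$: $p(x,x)\le p(x,y)$; $p(x,y)=p(y,x)$; $p(x,x)=p(x,y)=p(y,y)$ iff $x=y$; $p(x,y)\le p(x,z)+p(z,y)-p(z,z)$. A strong partial metric on $Y$ is $s:Y\times Y\to\mathbb{R}$ with $s(u,u)<s(u,v)$ for $u\neq v$, $s(u,v)=s(v,u)$, and $s(u,v)\le s(u,w)+s(w,v)-s(w,w)$. For such $q\in\{p,s\}$ the topology is generated by the balls $\{y\mid q(x,y)-q(x,x)<\epsilon\}$, so $a$ is a limit of $\{x_i\}$ iff for every $\epsilon>0$ there is $N$ with $q(a,x_i)-q(a,a)<\epsilon$ for all $i>N$. $\{x_i\}$ is Cauchy with central distance $r$ if for every $\epsilon>0$ there is $N$ with $|p(x_i,x_j)-r|<\epsilon$ for $i\ge j>N$; a special limit is a limit $a$ with $p(a,a)=r$; $(X,p)$ is complete if every Cauchy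 sequence has a special limit. A map $f:X\to Y$ is sequentially continuous if whenever $a$ is a limit of $\{x_i\}$, $f(a)$ is a limit of $\{f(x_i)\}$. $g$ is consistent if for all $x,z\in X$, $p(x,x)\le p(z,z)$ implies $s(g(x),g(x))\le s(g(z),g(z))$. *)

theory Defs
  imports Main "HOL.Real"
begin

definition partial_metric_on :: "'a set \<Rightarrow> ('a \<Rightarrow> 'a \<Rightarrow> real) \<Rightarrow> bool" where
  "partial_metric_on X p \<longleftrightarrow>
     (\<forall>x\<in>X. \<forall>y\<in>X. p x x \<le> p x y) \<and>
     (\<forall>x\<in>X. \<forall>y\<in>X. p x y = p y x) \<and>
     (\<forall>x\<in>X. \<forall>y\<in>X. (p x x = p x y \<and> p x y = p y y) \<longleftrightarrow> x = y) \<and>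
     (\<forall>x\<in>X. \<forall>y\<in>X. \<forall>z\<in>X. p x y \<le> p x z + p z y - p z z)"

definition strong_partial_metric_on :: "'b set \<Rightarrow> ('b \<Rightarrow> 'b \<Rightarrow> real) \<Rightarrow> bool" where
  "strong_partial_metric_on Y s \<longleftrightarrow>
     (\<forall>u\<in>Y. \<forall>v\<in>Y. u \<noteq> v \<longrightarrow> s u u < s u v) \<and>
     (\<forall>u\<in>Y. \<forall>v\<in>Y. s u v = s v u) \<and>
     (\<forall>u\<in>Y. \<forall>v\<in>Y. \<forall>w\<in>Y. s u v \<le> s u w + s w v - s w w)"

definition pm_limit :: "('a \<Rightarrow> 'a \<Rightarrow> real) \<Rightarrow> (nat \<Rightarrow> 'a) \<Rightarrow> 'a \<Rightarrow> bool" where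
  "pm_limit q xs a \<longleftrightarrow>
     (\<forall>\<epsilon>>0. \<exists>N. \<forall>i>N. q a (xs i) - q a a < \<epsilon>)"

definition pm_cauchy :: "('a \<Rightarrow> 'a \<Rightarrow> real) \<Rightarrow> (nat \<Rightarrow> 'a) \<Rightarrow> real \<Rightarrow> bool" where
  "pm_cauchy p xs r \<longleftrightarrow>
     (\<forall>\<epsilon>>0. \<exists>N. \<forall>i j. i \<ge> j \<and> j > N \<longrightarrow> \<bar>p (xs i) (xs j) - r\<bar> < \<epsilon>)"

definition pm_complete :: "'a set \<Rightarrow> ('a \<Rightarrow> 'a \<Rightarrow> real) \<Rightarrow> bool" where
  "pm_complete X p \<longleftrightarrow>
     (\<forall>xs r. (\<forall>i. xs i \<in> X) \<and> pm_cauchy p xs r \<longrightarrow>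
        (\<exists>a\<in>X. pm_limit p xs a \<and> p a a = r))"

definition seq_continuous ::
  "'a set \<Rightarrow> ('a \<Rightarrow> 'a \<Rightarrow> real) \<Rightarrow> ('b \<Rightarrow> 'b \<Rightarrow> real) \<Rightarrow> ('a \<Rightarrow> 'b) \<Rightarrow> bool" where
  "seq_continuous X p s f \<longleftrightarrow>
     (\<forall>xs a. (\<forall>i. xs i \<in> X) \<and> a \<in> X \<and> pm_limit p xs a \<longrightarrow>
        pm_limit s (\<lambda>i. f (xs i)) (f a))"

definition consistent ::
  "'a set \<Rightarrow> ('a \<Rightarrow> 'a \<Rightarrow> real) \<Rightarrow> ('b \<Rightarrow> 'b \<Rightarrow> real) \<Rightarrow> ('a \<Rightarrow> 'b) \<Rightarrow> bool" where
  "consistent X p s g \<longleftrightarrow>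
     (\<forall>x\<in>X. \<forall>z\<in>X. p x x \<le> p z z \<longrightarrow> s (g x) (g x) \<le> s (g z) (g z))"

end

theory Submission
  imports Defs
begin

lemma small_pow:
  fixes K c e :: real
  assumes "K \<ge> 0" "0 < c" "c < 1" "e > 0"
  shows "\<exists>N. \<forall>n\<ge>N. K * c^n < e"
proof -
  obtain N where N: "c^N < e / (K+1)"
    using real_arch_pow_inv[of "e/(K+1)" c] assms by auto
  have "K * c^n < e" if "n \<ge> N" for n
  proof -
    have "c^n \<le> c^N" using that assms by (simp add: power_decreasing)
    hence "K * c^n \<le> K * c^N" using assms by (simp add: mult_left_mono)
    also have "\<dots> \<le> (K+1) * c^N" using assms by (simp add: mult_right_mono)
    also have "\<dots> < (K+1) * (e/(K+1))" using N assms by (intro mult_strict_left_mono) auto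
    also have "\<dots> = e" using assms by simp
    finally show ?thesis .
  qed
  thus ?thesis by blast
qed

theorem theorem7p19:
  fixes X :: "'a set" and p :: "'a \<Rightarrow> 'a \<Rightarrow> real"
    and Y :: "'b set" and s :: "'b \<Rightarrow> 'b \<Rightarrow> real"
    and f g :: "'a \<Rightarrow> 'b" and r A c :: real
  assumes "X \<noteq> {}" and "partial_metric_on X p" and "pm_complete X p"
    and "strong_partial_metric_on Y s"
    and "f ` X \<subseteq> Y" and "g ` X \<subseteq> Y"
    and "seq_continuous X p s f" and "seq_continuous X p s g"
    and "consistent X p s g"
    and "A \<ge> 0" and "0 < c" and "c < 1"
    and "\<forall>x\<in>X. \<exists>z\<in>X.
           s (f z) (g z) - s (f z) (f z) \<le> c * (s (f x) (g x) - s (f x) (f x)) \<and>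
           r \<le> p z z \<and> p z z \<le> p x z \<and>
           p x z \<le> r + A * (s (f x) (g x) - s (f x) (f x))"
  shows "\<exists>a\<in>X. f a = g a"
proof -
  have pm1: "\<And>x y. x \<in> X \<Longrightarrow> y \<in> X \<Longrightarrow> p x x \<le> p x y"
    and pm2: "\<And>x y. x \<in> X \<Longrightarrow> y \<in> X \<Longrightarrow> p x y = p y x"
    and pm4: "\<And>x y z. x \<in> X \<Longrightarrow> y \<in> X \<Longrightarrow> z \<in> X \<Longrightarrow> p x y \<le> p x z + p z y - p z z"
    using assms(2) unfolding partial_metric_on_def by blast+
  have sm1: "\<And>x y. x \<in> Y \<Longrightarrow> y \<in> Y \<Longrightarrow> x \<noteq> y \<Longrightarrow> s x x < s x y"
    and sm2: "\<And>x y. x \<in> Y \<Longrightarrow> y \<in> Y \<Longrightarrow> s x y = s y x"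
    and sm3: "\<And>x y z. x \<in> Y \<Longrightarrow> y \<in> Y \<Longrightarrow> z \<in> Y \<Longrightarrow> s x y \<le> s x z + s z y - s z z"
    using assms(4) unfolding strong_partial_metric_on_def by blast+
  define D where "D x = s (f x) (g x) - s (f x) (f x)" for x
  have Dnn: "D x \<ge> 0" if "x \<in> X" for x
  proof (cases "f x = g x")
    case True thus ?thesis by (simp add: D_def)
  next
    case False
    have "f x \<in> Y" "g x \<in> Y" using that assms(5,6) by auto
    thus ?thesis using sm1 False by (fastforce simp: D_def)
  qed
  obtain Z where Z: "\<forall>x\<in>X. Z x \<in> X \<and> D (Z x) \<le> c * D x \<and> r \<le> p (Z x) (Z x) \<and>
      p (Z x) (Z x) \<le> p x (Z x) \<and> p x (Z x) \<le> r + A * D x"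
  proof -
    have "\<forall>x\<in>X. \<exists>z. z \<in> X \<and> D z \<le> c * D x \<and> r \<le> p z z \<and>
      p z z \<le> p x z \<and> p x z \<le> r + A * D x"
      using assms(13) unfolding D_def by blast
    from bchoice[OF this] show ?thesis using that by blast
  qed
  obtain x0 where x0: "x0 \<in> X" using assms(1) by blast
  define xs where "xs n = (Z ^^ n) x0" for n
  have xsX: "xs n \<in> X" for n by (induction n) (auto simp: xs_def x0 Z)
  have xsS: "xs (Suc n) = Z (xs n)" for n by (simp add: xs_def)
  define d0 where "d0 = D x0"
  have d0: "d0 \<ge> 0" using Dnn x0 d0_def by simp
  have Dn: "D (xs n) \<le> c^n * d0" for n
  proof (induction n)
    case 0 thus ?case by (simp add: xs_def d0_def)
  next
    case (Suc n)
    have "D (xs (Suc n)) \<le> c * D (xs n)" using Z xsX xsS by simp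
    also have "\<dots> \<le> c * (c^n * d0)" using Suc assms(11) by (simp add: mult_left_mono)
    finally show ?case by simp
  qed
  have rle: "r \<le> p (xs (Suc n)) (xs (Suc n))" for n using Z xsX xsS by simp
  have diag: "p (xs (Suc n)) (xs (Suc n)) \<le> p (xs n) (xs (Suc n))" for n using Z xsX xsS by simp
  have step: "p (xs n) (xs (Suc n)) \<le> r + A * (c^n * d0)" for n
  proof -
    have "p (xs n) (xs (Suc n)) \<le> r + A * D (xs n)" using Z xsX xsS by simp
    also have "\<dots> \<le> r + A * (c^n * d0)" using Dn assms(10) by (simp add: mult_left_mono)
    finally show ?thesis .
  qed
  have chain: "p (xs j) (xs (j + Suc k)) \<le> r + A * d0 * (\<Sum>m<Suc k. c^(j+m))" for j k
  proof (induction k)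
    case 0 thus ?case using step[of j] by (simp add: algebra_simps)
  next
    case (Suc k)
    have tri: "p (xs j) (xs (j + Suc (Suc k))) \<le> p (xs j) (xs (j + Suc k))
        + p (xs (j + Suc k)) (xs (j + Suc (Suc k))) - p (xs (j + Suc k)) (xs (j + Suc k))"
      using pm4 xsX by blast
    have "p (xs (j + Suc k)) (xs (j + Suc (Suc k))) \<le> r + A * (c^(j + Suc k) * d0)"
      using step[of "j + Suc k"] by simp
    moreover have "r \<le> p (xs (j + Suc k)) (xs (j + Suc k))" using rle[of "j+k"] by simp
    ultimately show ?case using tri Suc by (simp add: algebra_simps)
  qed
  define K where "K = A * d0 / (1 - c)"
  have K0: "K \<ge> 0" unfolding K_def using assms(10,12) d0 by simp
  have sumb: "(\<Sum>m<n. c^(j+m)) \<le> c^j / (1 - c)" for j n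
  proof -
    have "(\<Sum>m<n. c^(j+m)) = c^j * (\<Sum>m<n. c^m)" by (simp add: power_add sum_distrib_left)
    also have "\<dots> = c^j * ((1 - c^n) / (1 - c))" using sum_gp_strict[of c n] assms(12) by simp
    also have "\<dots> \<le> c^j * (1 / (1 - c))" using assms(11,12)
      by (intro mult_left_mono divide_right_mono) auto
    finally show ?thesis by simp
  qed
  have bound: "\<bar>p (xs i) (xs j) - r\<bar> \<le> K * c^(j - 1)" if "i \<ge> j" "j \<ge> 1" for i j
  proof -
    have low: "r \<le> p (xs i) (xs j)"
    proof -
      have "r \<le> p (xs i) (xs i)" using rle[of "i-1"] that by simp
      also have "\<dots> \<le> p (xs i) (xs j)" using pm1 xsX by blast
      finally show ?thesis .
    qed
    have Kge: "A * d0 \<le> K" unfolding K_def using assms(10,11,12) d0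
      by (simp add: le_divide_eq mult_left_le)
    have cj: "c^j \<le> c^(j-1)" using assms(11,12) by (simp add: power_decreasing)
    have up: "p (xs i) (xs j) \<le> r + K * c^(j - 1)"
    proof (cases "i = j")
      case True
      have "p (xs i) (xs j) \<le> p (xs (j-1)) (xs (Suc (j-1)))" using diag[of "j-1"] that True by simp
      also have "\<dots> \<le> r + A * (c^(j-1) * d0)" by (rule step)
      also have "\<dots> \<le> r + K * c^(j-1)" using Kge assms(11)
        by (simp add: mult.commute mult.left_commute mult_right_mono)
      finally show ?thesis .
    next
      case False
      define k where "k = i - j - 1"
      have k: "i = j + Suc k" using that False unfolding k_def by arith
      have "p (xs i) (xs j) = p (xs j) (xs i)" using pm2 xsX by blast
      also have "\<dots> \<le> r + A * d0 * (\<Sum>m<Suc k. c^(j+m))" using chain k by simp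
      also have "\<dots> \<le> r + A * d0 * (c^j / (1 - c))"
        using mult_left_mono[OF sumb[of j "Suc k"], of "A * d0"] assms(10) d0
        by (simp del: sum.lessThan_Suc)
      also have "\<dots> = r + K * c^j" by (simp add: K_def)
      also have "\<dots> \<le> r + K * c^(j-1)" using cj K0 by (simp add: mult_left_mono)
      finally show ?thesis .
    qed
    show ?thesis using low up by simp
  qed
  have cauchy: "pm_cauchy p xs r"
    unfolding pm_cauchy_def
  proof (intro allI impI)
    fix e :: real assume e: "e > 0"
    obtain N where N: "\<forall>n\<ge>N. K * c^n < e" using small_pow[OF K0 assms(11,12) e] by blast
    show "\<exists>N. \<forall>i j. j \<le> i \<and> N < j \<longrightarrow> \<bar>p (xs i) (xs j) - r\<bar> < e"
    proof (intro exI allI impI)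
      fix i j assume "j \<le> i \<and> N < j"
      hence ij: "N < j" "j \<le> i" by auto
      have "\<bar>p (xs i) (xs j) - r\<bar> \<le> K * c^(j-1)" using bound ij by simp
      moreover have "K * c^(j-1) < e" using N ij by simp
      ultimately show "\<bar>p (xs i) (xs j) - r\<bar> < e" by linarith
    qed
  qed
  obtain a where a: "a \<in> X" "pm_limit p xs a" "p a a = r"
    using assms(3) cauchy xsX unfolding pm_complete_def by blast
  have limf: "pm_limit s (\<lambda>i. f (xs i)) (f a)"
    using assms(7) a xsX unfolding seq_continuous_def by blast
  have limg: "pm_limit s (\<lambda>i. g (xs i)) (g a)"
    using assms(8) a xsX unfolding seq_continuous_def by blast
  have fa: "f a \<in> Y" and ga: "g a \<in> Y" using a assms(5,6) by auto
  have fY: "f (xs i) \<in> Y" and gY: "g (xs i) \<in> Y" for i using xsX assms(5,6) by auto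
  have cons: "s (g a) (g a) \<le> s (g (xs i)) (g (xs i))" if "i \<ge> 1" for i
  proof -
    have "p a a \<le> p (xs i) (xs i)" using a rle[of "i-1"] that by simp
    thus ?thesis using assms(9) a xsX unfolding consistent_def by blast
  qed
  have le: "s (f a) (g a) \<le> s (f a) (f a)"
  proof (rule field_le_epsilon)
    fix e :: real assume e: "e > 0"
    obtain N1 where N1: "\<forall>i>N1. s (f a) (f (xs i)) - s (f a) (f a) < e/3"
      using limf e unfolding pm_limit_def by (meson divide_pos_pos zero_less_numeral)
    obtain N2 where N2: "\<forall>i>N2. s (g a) (g (xs i)) - s (g a) (g a) < e/3"
      using limg e unfolding pm_limit_def by (meson divide_pos_pos zero_less_numeral)
    obtain N3 where N3: "\<forall>n\<ge>N3. d0 * c^n < e/3"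
      using small_pow[OF d0 assms(11,12), of "e/3"] e by auto
    define i where "i = Suc (N1 + N2 + N3)"
    have h1: "s (f a) (f (xs i)) - s (f a) (f a) < e/3" using N1 i_def by simp
    have h2: "s (g a) (g (xs i)) - s (g a) (g a) < e/3" using N2 i_def by simp
    have h3: "D (xs i) < e/3" proof -
      have "i \<ge> N3" unfolding i_def by simp
      hence "d0 * c^i < e/3" using N3 by blast
      thus ?thesis using Dn[of i] by (simp add: mult.commute)
    qed
    have h4: "s (g a) (g a) \<le> s (g (xs i)) (g (xs i))" using cons i_def by simp
    have t1: "s (f a) (g a) \<le> s (f a) (f (xs i)) + s (f (xs i)) (g a) - s (f (xs i)) (f (xs i))"
      using sm3 fa ga fY by blast
    have t2: "s (f (xs i)) (g a) \<le> s (f (xs i)) (g (xs i)) + s (g (xs i)) (g a) - s (g (xs i)) (g (xs i))"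
      using sm3 ga fY gY by blast
    have sym: "s (g (xs i)) (g a) = s (g a) (g (xs i))" using sm2 ga gY by blast
    show "s (f a) (g a) \<le> s (f a) (f a) + e"
      using h1 h2 h3 h4 t1 t2 sym unfolding D_def by linarith
  qed
  have "f a = g a"
  proof (rule ccontr)
    assume "f a \<noteq> g a"
    hence "s (f a) (f a) < s (f a) (g a)" using sm1 fa ga by blast
    thus False using le by simp
  qed
  thus ?thesis using a by blast
qed

end
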